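(* Let $S$ be an additively reduced semidomain and $G$ a torsion-free abelian group. Let $f=\sum_{i=0}^n s_ix^{g_i}\in S[G]$ with $g_0>g_1>\dots>g_n$ and $s_i\in S\setminus\{0\}$. Then: (1) if $|\operatorname{supp}(f)|\ge2$ and $2g_{n-1}>g_0+g_n$, then $f$ is monolithic; (2) if $|\operatorname{supp}(f)|>3$ and $2g_{n-1}\ge g_0+g_n$, then $f$ is monolithic.
   Context: A semidomain is a subsemiring (containing $0$ and $1$) of an integral domain. $S$ is additively reduced if $0$ is the only invertible element of $(S,+)$. $G$ carries a fixed total order compatible with addition. $S[G]$ is the semidomain of formal finite sums $\sum_{g\in G}s_gx^g$ with polynomial operations; $\operatorname{supp}(f)$ is the set of exponents with nonzero coefficient. A nonzero $f\in S[G]$ is monolithic if whenever $f=pq$ with $p,q\in S[G]$, one of $p,q$ is a monomial $sx^g$. *)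

theory Defs
  imports "HOL-Library.Poly_Mapping"
begin

definition semidomain :: "'a::idom set \<Rightarrow> bool" where
  "semidomain S \<longleftrightarrow> 0 \<in> S \<and> 1 \<in> S \<and>
     (\<forall>x\<in>S. \<forall>y\<in>S. x + y \<in> S \<and> x * y \<in> S)"

definition add_reduced :: "'a::idom set \<Rightarrow> bool" where
  "add_reduced S \<longleftrightarrow> (\<forall>x\<in>S. (\<exists>y\<in>S. x + y = 0) \<longrightarrow> x = 0)"

text \<open>The semigroup semiring S[G]: finitely supported functions G \<Rightarrow> S,
with convolution product (from Poly_Mapping).\<close>
definition semigroup_semiring :: "'a::idom set \<Rightarrow> ('g::ab_group_add \<Rightarrow>\<^sub>0 'a) set" where
  "semigroup_semiring S = {f. \<forall>g. Poly_Mapping.lookup f g \<in> S}"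

definition is_monomial :: "'a::idom set \<Rightarrow> ('g::ab_group_add \<Rightarrow>\<^sub>0 'a) \<Rightarrow> bool" where
  "is_monomial S p \<longleftrightarrow> (\<exists>s\<in>S. \<exists>g. p = Poly_Mapping.single g s)"

definition monolithic :: "'a::idom set \<Rightarrow> ('g::ab_group_add \<Rightarrow>\<^sub>0 'a) \<Rightarrow> bool" where
  "monolithic S f \<longleftrightarrow> f \<noteq> 0 \<and>
     (\<forall>p\<in>semigroup_semiring S. \<forall>q\<in>semigroup_semiring S.
        f = p * q \<longrightarrow> is_monomial S p \<or> is_monomial S q)"

end

theory Submission imports Defs begin

lemma lookup_mult_group:
  fixes p q :: "'g::ab_group_add \<Rightarrow>\<^sub>0 'a::idom"
  shows "Poly_Mapping.lookup (p * q) k = (\<Sum>l\<in>Poly_Mapping.keys p. Poly_Mapping.lookup p l * Poly_Mapping.lookup q (k - l))"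
proof -
  have inner: "(\<Sum>r::'g. Poly_Mapping.lookup q r when k = l + r) = Poly_Mapping.lookup q (k - l)" for l :: 'g
  proof -
    have "(\<lambda>r::'g. Poly_Mapping.lookup q r when k = l + r) = (\<lambda>r. Poly_Mapping.lookup q r when r = k - l)"
      by (rule ext, rule when_cong) (auto simp: algebra_simps)
    then show ?thesis by (simp only:) (rule Sum_any_when_equal)
  qed
  have "Poly_Mapping.lookup (p * q) k = (\<Sum>l. Poly_Mapping.lookup p l * Poly_Mapping.lookup q (k - l))"
    by (simp add: lookup_mult inner)
  also have "\<dots> = (\<Sum>l\<in>Poly_Mapping.keys p. Poly_Mapping.lookup p l * Poly_Mapping.lookup q (k - l))"
    by (rule Sum_any.expand_superset) (auto simp: in_keys_iff)
  finally show ?thesis .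
qed

lemma sum_in_S:
  assumes "semidomain S" "finite A" "\<And>x. x \<in> A \<Longrightarrow> h x \<in> S"
  shows "sum h A \<in> S"
  using assms(2,3)
proof (induction A rule: finite_induct)
  case empty then show ?case using assms(1) by (simp add: semidomain_def)
next
  case (insert x F) then show ?case using assms(1) by (simp add: semidomain_def)
qed

lemma sum_S_nonzero:
  assumes "semidomain S" "add_reduced S" "finite A" "\<And>x. x \<in> A \<Longrightarrow> h x \<in> S"
    and "x0 \<in> A" "h x0 \<noteq> 0"
  shows "sum h A \<noteq> 0"
proof
  assume "sum h A = 0"
  moreover have "sum h A = h x0 + sum h (A - {x0})"
    using assms(3,5) by (simp add: sum.remove)
  moreover have "sum h (A - {x0}) \<in> S"
    using sum_in_S[OF assms(1)] assms(3,4) by auto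
  ultimately have "h x0 = 0" using assms(2,4,5) unfolding add_reduced_def by metis
  with assms(6) show False by simp
qed

lemma keys_mult_sup:
  fixes p q :: "'g::ab_group_add \<Rightarrow>\<^sub>0 'a::idom"
  assumes "semidomain S" "add_reduced S" "p \<in> semigroup_semiring S" "q \<in> semigroup_semiring S"
    and "a \<in> Poly_Mapping.keys p" "b \<in> Poly_Mapping.keys q"
  shows "(a::'g) + b \<in> Poly_Mapping.keys (p * q)"
proof -
  have "Poly_Mapping.lookup (p * q) (a + b) = (\<Sum>l\<in>Poly_Mapping.keys p. Poly_Mapping.lookup p l * Poly_Mapping.lookup q (a + b - l))"
    by (rule lookup_mult_group)
  also have "\<dots> \<noteq> 0"
  proof (rule sum_S_nonzero[OF assms(1,2), where h="\<lambda>l. Poly_Mapping.lookup p l * Poly_Mapping.lookup q (a + b - l)" and A="Poly_Mapping.keys p"])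
    show "finite (Poly_Mapping.keys p)" by simp
    show "Poly_Mapping.lookup p l * Poly_Mapping.lookup q (a + b - l) \<in> S" for l
      using assms(1,3,4) unfolding semidomain_def semigroup_semiring_def by auto
    show "a \<in> Poly_Mapping.keys p" by fact
    show "Poly_Mapping.lookup p a * Poly_Mapping.lookup q (a + b - a) \<noteq> 0"
      using assms(5,6) by (simp add: in_keys_iff)
  qed
  finally show ?thesis by (simp add: in_keys_iff)
qed

lemma nonmono_keys:
  assumes "p \<in> semigroup_semiring S" "\<not> is_monomial S p" "semidomain S"
  shows "\<exists>a\<in>Poly_Mapping.keys p. \<exists>b\<in>Poly_Mapping.keys p. a \<noteq> b"
proof (rule ccontr)
  assume "\<not> ?thesis"
  then have sub: "Poly_Mapping.keys p \<subseteq> {c}" if "c \<in> Poly_Mapping.keys p" for c using that by auto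
  show False
  proof (cases "Poly_Mapping.keys p = {}")
    case True
    then have "p = Poly_Mapping.single 0 0" using True by (metis in_keys_iff keys_zero lookup_zero poly_mapping_eqI single_zero)
    then show False using assms unfolding is_monomial_def semidomain_def by blast
  next
    case False
    then obtain c where c: "c \<in> Poly_Mapping.keys p" by blast
    have "p = Poly_Mapping.single c (Poly_Mapping.lookup p c)"
      by (rule poly_mapping_eqI) (use sub[OF c] in \<open>auto simp: lookup_single when_def in_keys_iff\<close>)
    then show False using assms(1,2) unfolding is_monomial_def semigroup_semiring_def by blast
  qed
qed

lemma eq_of_sum_le: fixes a b c d :: "'g::linordered_ab_group_add"
  assumes "a \<le> b" "c \<le> d" "b + d \<le> a + c" shows "a = b"
proof -
  have "a + c \<le> b + c" using assms(1) by (rule add_right_mono)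
  also have "\<dots> \<le> b + d" using assms(2) by (rule add_left_mono)
  finally have "a + c \<le> b + d" .
  with assms(3) have "b + d = a + c" by simp
  moreover have "b + c \<le> b + d" using assms(2) by (rule add_left_mono)
  moreover have "a + c \<le> b + c" using assms(1) by (rule add_right_mono)
  ultimately have "a + c = b + c" by simp
  then show ?thesis by simp
qed


lemma core:
  fixes g :: "nat \<Rightarrow> 'g::linordered_ab_group_add" and K P Q :: "'g set"
  assumes dec: "\<And>i j. i < j \<Longrightarrow> j \<le> n \<Longrightarrow> g j < g i"
    and n1: "1 \<le> n"
    and Kimg: "K \<subseteq> g ` {..n}" and gnK: "g n \<in> K"
    and KPQ: "K \<subseteq> {a + b | a b. a \<in> P \<and> b \<in> Q}"
    and PQK: "\<And>a b. a \<in> P \<Longrightarrow> b \<in> Q \<Longrightarrow> a + b \<in> K"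
    and fin: "finite P" "finite Q"
    and P2: "pa \<in> P" "pb \<in> P" "pa \<noteq> pb"
    and Q2: "qa \<in> Q" "qb \<in> Q" "qa \<noteq> qb"
  shows "g (n - 1) + g (n - 1) \<le> g 0 + g n \<and>
         (g (n - 1) + g (n - 1) = g 0 + g n \<longrightarrow> card K \<le> 3)"
proof -
  have gdec: "g j \<le> g i" if "i \<le> j" "j \<le> n" for i j
  proof (cases "i = j")
    case False
    then have "i < j" using that(1) by simp
    then show ?thesis by (rule order.strict_implies_order[OF dec[OF _ that(2)]])
  next
    case True
    then show ?thesis by (rule subst) (rule order.refl)
  qed
  have Kup: "x \<le> g 0" if "x \<in> K" for x
  proof -
    have "x \<in> g ` {..n}" using Kimg that(1) by (rule subsetD)
    then obtain j where j0: "j \<in> {..n}" "x = g j" by (rule imageE)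
    then have j: "j \<le> n" "x = g j" by simp_all
    then show ?thesis using gdec[of 0 j] by simp
  qed
  have Klow: "g n \<le> x" if "x \<in> K" for x
  proof -
    have "x \<in> g ` {..n}" using Kimg that(1) by (rule subsetD)
    then obtain j where j0: "j \<in> {..n}" "x = g j" by (rule imageE)
    then have j: "j \<le> n" "x = g j" by simp_all
    then show ?thesis using gdec[of j n] by simp
  qed
  have Kmid: "g (n - 1) \<le> x" if "x \<in> K" "x \<noteq> g n" for x
  proof -
    have "x \<in> g ` {..n}" using Kimg that(1) by (rule subsetD)
    then obtain j where j0: "j \<in> {..n}" "x = g j" by (rule imageE)
    then have j: "j \<le> n" "x = g j" by simp_all
    then have "j \<le> n - 1" using that by (cases "j = n") auto
    then show ?thesis using gdec[of j "n - 1"] j n1 by simp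
  qed
  define am where "am = Min P"
  define aM where "aM = Max P"
  define am2 where "am2 = Min (P - {am})"
  define bm where "bm = Min Q"
  define bM where "bM = Max Q"
  define bm2 where "bm2 = Min (Q - {bm})"
  have Pne: "P \<noteq> {}" and Qne: "Q \<noteq> {}" using P2 Q2 by auto
  have am: "am \<in> P" "\<And>a. a \<in> P \<Longrightarrow> am \<le> a" using fin Pne by (auto simp: am_def)
  have aM: "aM \<in> P" "\<And>a. a \<in> P \<Longrightarrow> a \<le> aM" using fin Pne by (auto simp: aM_def)
  have bm: "bm \<in> Q" "\<And>b. b \<in> Q \<Longrightarrow> bm \<le> b" using fin Qne by (auto simp: bm_def)
  have bM: "bM \<in> Q" "\<And>b. b \<in> Q \<Longrightarrow> b \<le> bM" using fin Qne by (auto simp: bM_def)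
  have Pne2: "P - {am} \<noteq> {}" using P2 by auto
  have Qne2: "Q - {bm} \<noteq> {}" using Q2 by auto
  have am2: "am2 \<in> P" "am2 \<noteq> am" "\<And>a. a \<in> P \<Longrightarrow> a \<noteq> am \<Longrightarrow> am2 \<le> a"
    using fin Pne2 Min_in[of "P - {am}"] Min_le[of "P - {am}"] by (auto simp: am2_def)
  have bm2: "bm2 \<in> Q" "bm2 \<noteq> bm" "\<And>b. b \<in> Q \<Longrightarrow> b \<noteq> bm \<Longrightarrow> bm2 \<le> b"
    using fin Qne2 Min_in[of "Q - {bm}"] Min_le[of "Q - {bm}"] by (auto simp: bm2_def)
  have amlt: "am < am2" using am(2)[OF am2(1)] am2(2) by (simp add: order.strict_iff_order)
  have bmlt: "bm < bm2" using bm(2)[OF bm2(1)] bm2(2) by (simp add: order.strict_iff_order)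
  have gn: "g n = am + bm"
  proof (rule order.antisym)
    show "g n \<le> am + bm" by (rule Klow[OF PQK[OF am(1) bm(1)]])
    obtain a b where ab: "a \<in> P" "b \<in> Q" "g n = a + b" using gnK KPQ by blast
    then show "am + bm \<le> g n" using add_mono[OF am(2)[OF ab(1)] bm(2)[OF ab(2)]] by simp
  qed
  define A where "A = am2 + bm"
  define B where "B = am + bm2"
  have AK: "A \<in> K" "B \<in> K" using PQK am bm am2 bm2 by (auto simp: A_def B_def)
  have "am + bm < A" unfolding A_def using amlt by (rule add_strict_right_mono)
  then have "A \<noteq> g n" using gn by auto
  then have GA: "g (n - 1) \<le> A" by (rule Kmid[OF AK(1)])
  have "am + bm < B" unfolding B_def using bmlt by (rule add_strict_left_mono)
  then have "B \<noteq> g n" using gn by auto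
  then have GB: "g (n - 1) \<le> B" by (rule Kmid[OF AK(2)])
  have g0: "aM + bM \<le> g 0" by (rule Kup[OF PQK[OF aM(1) bM(1)]])
  have AA: "A \<le> aM + bm" unfolding A_def using aM(2)[OF am2(1)] by (rule add_right_mono)
  have BB: "B \<le> am + bM" unfolding B_def using bM(2)[OF bm2(1)] by (rule add_left_mono)
  have sumeq: "(aM + bm) + (am + bM) = (aM + bM) + (am + bm)" by (simp add: algebra_simps)
  have c1: "g (n - 1) + g (n - 1) \<le> A + B" using GA GB by (rule add_mono)
  have c2: "A + B \<le> (aM + bm) + (am + bM)" using AA BB by (rule add_mono)
  have c3: "(aM + bM) + (am + bm) \<le> g 0 + g n"
    unfolding gn using g0 by (rule add_right_mono)
  have c23: "A + B \<le> g 0 + g n"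
    using c2 c3 unfolding sumeq by (rule order.trans)
  have part1: "g (n - 1) + g (n - 1) \<le> g 0 + g n"
    using c1 c23 by (rule order.trans)
  moreover have "card K \<le> 3" if eq: "g (n - 1) + g (n - 1) = g 0 + g n"
  proof -
    have ABle: "A + B \<le> g (n - 1) + g (n - 1)" using c23 unfolding eq .
    have GeqA: "g (n - 1) = A" using eq_of_sum_le[OF GA GB ABle] .
    have GeqB: "g (n - 1) = B" using eq_of_sum_le[OF GB GA] ABle by (simp add: add.commute)
    have "(aM + bm) + (am + bM) \<le> g 0 + g n" using c3 unfolding sumeq .
    also have "\<dots> = A + B" using eq GeqA GeqB by simp
    finally have le2: "(aM + bm) + (am + bM) \<le> A + B" .
    have "A = aM + bm" using eq_of_sum_le[OF AA BB le2] .
    then have am2M: "am2 = aM" unfolding A_def by simp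
    have "B = am + bM" using eq_of_sum_le[OF BB AA] le2 by (simp add: add.commute)
    then have bm2M: "bm2 = bM" unfolding B_def by simp
    have cross: "aM + bm = am + bM"
      using \<open>A = aM + bm\<close> \<open>B = am + bM\<close> GeqA GeqB by simp
    have Psub: "a = am \<or> a = aM" if "a \<in> P" for a
    proof (cases "a = am")
      case False
      then have "am2 \<le> a" using am2(3)[OF that] by blast
      moreover have "a \<le> aM" using aM(2)[OF that] .
      ultimately show ?thesis using am2M by simp
    qed simp
    have Qsub: "b = bm \<or> b = bM" if "b \<in> Q" for b
    proof (cases "b = bm")
      case False
      then have "bm2 \<le> b" using bm2(3)[OF that] by blast
      moreover have "b \<le> bM" using bM(2)[OF that] .
      ultimately show ?thesis using bm2M by simp
    qed simp
    have "K \<subseteq> {am + bm, am + bM, aM + bM}"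
    proof
      fix x assume "x \<in> K"
      then obtain a b where ab: "a \<in> P" "b \<in> Q" "x = a + b" using KPQ by blast
      show "x \<in> {am + bm, am + bM, aM + bM}"
        using Psub[OF ab(1)] Qsub[OF ab(2)] cross ab(3) by auto
    qed
    then have "card K \<le> card {am + bm, am + bM, aM + bM}" by (rule card_mono[rotated]) simp
    also have "\<dots> \<le> 3" by (simp add: card_insert_if)
    finally show ?thesis .
  qed
  ultimately show ?thesis by blast
qed


theorem lemma3p3:
  fixes S :: "'a::idom set"
    and f :: "'g::linordered_ab_group_add \<Rightarrow>\<^sub>0 'a"
    and n :: nat and s :: "nat \<Rightarrow> 'a" and g :: "nat \<Rightarrow> 'g"
  assumes "semidomain S" and "add_reduced S"
    and "\<And>i j. i < j \<Longrightarrow> j \<le> n \<Longrightarrow> g j < g i"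
    and "\<And>i. i \<le> n \<Longrightarrow> s i \<in> S - {0}"
    and "f = (\<Sum>i\<le>n. Poly_Mapping.single (g i) (s i))"
  shows "(card (Poly_Mapping.keys f) \<ge> 2 \<and> g (n - 1) + g (n - 1) > g 0 + g n \<longrightarrow> monolithic S f)
       \<and> (card (Poly_Mapping.keys f) > 3 \<and> g (n - 1) + g (n - 1) \<ge> g 0 + g n \<longrightarrow> monolithic S f)"
proof -
  note dec = assms(3)
  have ginj: "g i \<noteq> g j" if "i \<le> n" "j \<le> n" "i \<noteq> j" for i j
    using that dec[of i j] dec[of j i] by (cases "i < j") auto
  have look: "Poly_Mapping.lookup f x = (\<Sum>i\<le>n. s i when g i = x)" for x
    using assms(5) by (simp add: lookup_sum lookup_single)
  have Kimg: "Poly_Mapping.keys f \<subseteq> g ` {..n}"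
  proof
    fix x assume "x \<in> Poly_Mapping.keys f"
    then have "(\<Sum>i\<le>n. s i when g i = x) \<noteq> 0" by (simp add: in_keys_iff look)
    then obtain i where "i \<in> {..n}" "(s i when g i = x) \<noteq> 0"
      by (rule sum.not_neutral_contains_not_neutral)
    then show "x \<in> g ` {..n}" by (cases "g i = x") auto
  qed
  have gK: "g j \<in> Poly_Mapping.keys f" if "j \<le> n" for j
  proof -
    have "(\<Sum>i\<le>n. s i when g i = g j) = (s j when g j = g j) + (\<Sum>i\<in>{..n} - {j}. s i when g i = g j)"
      using that by (simp add: sum.remove)
    also have "(\<Sum>i\<in>{..n} - {j}. s i when g i = g j) = 0"
      by (rule sum.neutral) (use ginj that in auto)
    finally have "Poly_Mapping.lookup f (g j) = s j" by (simp add: look)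
    then show ?thesis using assms(4)[OF that] by (simp add: in_keys_iff)
  qed
  have cardK: "card (Poly_Mapping.keys f) \<le> n + 1"
  proof -
    have "card (Poly_Mapping.keys f) \<le> card (g ` {..n})" using Kimg by (rule card_mono[rotated]) simp
    also have "\<dots> \<le> card {..n}" by (rule card_image_le) simp
    finally show ?thesis by simp
  qed
  have main: "monolithic S f \<or> (g (n - 1) + g (n - 1) \<le> g 0 + g n \<and>
         (g (n - 1) + g (n - 1) = g 0 + g n \<longrightarrow> card (Poly_Mapping.keys f) \<le> 3))"
    if c2: "card (Poly_Mapping.keys f) \<ge> 2"
  proof (cases "monolithic S f")
    case True then show ?thesis by simp
  next
    case False
    have n1: "1 \<le> n" using c2 cardK by simp
    have "f \<noteq> 0" using c2 by auto
    with False obtain p q where pq: "p \<in> semigroup_semiring S" "q \<in> semigroup_semiring S"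
      "f = p * q" "\<not> is_monomial S p" "\<not> is_monomial S q"
      unfolding monolithic_def by blast
    obtain a1 a2 where P2: "a1 \<in> Poly_Mapping.keys p" "a2 \<in> Poly_Mapping.keys p" "a1 \<noteq> a2"
      using nonmono_keys[OF pq(1,4) assms(1)] by blast
    obtain b1 b2 where Q2: "b1 \<in> Poly_Mapping.keys q" "b2 \<in> Poly_Mapping.keys q" "b1 \<noteq> b2"
      using nonmono_keys[OF pq(2,5) assms(1)] by blast
    have "g (n - 1) + g (n - 1) \<le> g 0 + g n \<and>
         (g (n - 1) + g (n - 1) = g 0 + g n \<longrightarrow> card (Poly_Mapping.keys f) \<le> 3)"
    proof (rule core[OF dec n1 Kimg gK[OF order.refl], where P="Poly_Mapping.keys p" and Q="Poly_Mapping.keys q" and pa=a1 and pb=a2 and qa=b1 and qb=b2])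
      show "Poly_Mapping.keys f \<subseteq> {a + b |a b. a \<in> Poly_Mapping.keys p \<and> b \<in> Poly_Mapping.keys q}"
        unfolding pq(3) by (rule keys_mult)
      show "a + b \<in> Poly_Mapping.keys f" if "a \<in> Poly_Mapping.keys p" "b \<in> Poly_Mapping.keys q" for a b
        unfolding pq(3) by (rule keys_mult_sup[OF assms(1,2) pq(1,2) that])
    qed (use P2 Q2 in auto)
    then show ?thesis by simp
  qed
  show ?thesis
  proof (intro conjI impI)
    assume h: "card (Poly_Mapping.keys f) \<ge> 2 \<and> g (n - 1) + g (n - 1) > g 0 + g n"
    then have "\<not> (g (n - 1) + g (n - 1) \<le> g 0 + g n)" by (simp add: not_le)
    then show "monolithic S f" using main h by blast
  next
    assume h: "card (Poly_Mapping.keys f) > 3 \<and> g (n - 1) + g (n - 1) \<ge> g 0 + g n"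
    then have c2: "card (Poly_Mapping.keys f) \<ge> 2" by simp
    show "monolithic S f"
    proof (rule ccontr)
      assume nm: "\<not> monolithic S f"
      then have le: "g (n - 1) + g (n - 1) \<le> g 0 + g n"
        and imp: "g (n - 1) + g (n - 1) = g 0 + g n \<longrightarrow> card (Poly_Mapping.keys f) \<le> 3"
        using main[OF c2] by blast+
      have "g (n - 1) + g (n - 1) = g 0 + g n" using le h by (simp add: order.antisym)
      then have "card (Poly_Mapping.keys f) \<le> 3" using imp by blast
      then show False using h by simp
    qed
  qed
qed

end
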